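(* Let $T_1,T_2$ be rooted trees in which every leaf of $T_i$ has depth $h_i$. A prefix is a pair $p=(p_1,p_2)$ with $p_i$ a node of $T_i$; it is fully specified if both $p_1,p_2$ are leaves. Write $e\preceq p$ if for each $i$, $p_i$ is an ancestor of or equal to $e_i$, and $e\prec p$ if $e\preceq p$ and $e\ne p$. For a finite nonempty set $X$ of prefixes, if for each $i$ the nodes $\{x_i:x\in X\}$ are pairwise comparable in $T_i$ (each is an ancestor of or equal to the other), let $\mathrm{glb}(X)$ be the prefix whose $i$-th coordinate is the deepest of these nodes; otherwise $\mathrm{glb}(X)$ is undefined (a trivial item, contributing count $0$). Let $S$ be a finite multiset of fully specified elements, $f(e)$ the multiplicity of $e$, $f(p)=\sum_{e\in S,\,e\preceq p}f(e)$ for a prefix $p$. Let $P$ be any set of prefixes and $p$ a prefix; set $P_p=\{q\in P:q\prec p\}$, $F_p=\sum f(e)$ over fully specified $e\preceq p$ with $e\not\preceq q$ for all $q\in P_p$, and $H_p=\{h\in P: h\prec p,\ \nexists h'\in P \text{ with } h\prec h'\prec p\}$. Let $T_p$ be the set of prefixes $q$ such that $q=\mathrm{glb}(\{h,h'\})$ for some two distinct $h,h'\in H_p$, but $q$ is not equal to $\mathrm{glb}(X)$ for any $X\subseteq H_p$ with $|X|\ge 3$. Then $$F_p=f(p)-\sum_{q\in H_p}f(q)+\sum_{q\in T_p}f(q).$$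
   Context: Two-dimensional hierarchical setting (e.g. source/destination IP address pairs, each coordinate generalized by wildcarding trailing bytes). $f(p)$ is the unconditioned count and $F_p$ the conditioned count of $p$ with respect to $P$. *)

theory Defs
  imports Main "HOL-Library.Multiset" "HOL-Library.Sublist"
begin

text \<open>A rooted tree is represented by the set of its nodes, each node being the list of
  edge labels on the path from the root (the root is the empty list).  Node y is an
  ancestor of or equal to node x iff y is a prefix of x.\<close>

definition rooted_tree :: "'a list set \<Rightarrow> bool" where
  "rooted_tree T \<longleftrightarrow> finite T \<and> [] \<in> T \<and> (\<forall>xs ys. xs @ ys \<in> T \<longrightarrow> xs \<in> T)"

definition is_leaf :: "'a list set \<Rightarrow> 'a list \<Rightarrow> bool" where
  "is_leaf T x \<longleftrightarrow> x \<in> T \<and> (\<forall>c. x @ [c] \<notin> T)"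

definition leaves_at_depth :: "'a list set \<Rightarrow> nat \<Rightarrow> bool" where
  "leaves_at_depth T h \<longleftrightarrow> (\<forall>x. is_leaf T x \<longrightarrow> length x = h)"

definition pre_le :: "('a list \<times> 'b list) \<Rightarrow> ('a list \<times> 'b list) \<Rightarrow> bool" where
  "pre_le e p \<longleftrightarrow> prefix (fst p) (fst e) \<and> prefix (snd p) (snd e)"

definition pre_lt :: "('a list \<times> 'b list) \<Rightarrow> ('a list \<times> 'b list) \<Rightarrow> bool" where
  "pre_lt e p \<longleftrightarrow> pre_le e p \<and> e \<noteq> p"

definition fully_specified ::
  "'a list set \<Rightarrow> 'b list set \<Rightarrow> ('a list \<times> 'b list) \<Rightarrow> bool" where
  "fully_specified T1 T2 e \<longleftrightarrow> is_leaf T1 (fst e) \<and> is_leaf T2 (snd e)"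

definition pairwise_comparable :: "'c list set \<Rightarrow> bool" where
  "pairwise_comparable A \<longleftrightarrow> (\<forall>x\<in>A. \<forall>y\<in>A. prefix x y \<or> prefix y x)"

text \<open>Greatest lower bound of a finite nonempty set of prefixes; None = undefined.\<close>
definition glb :: "('a list \<times> 'b list) set \<Rightarrow> ('a list \<times> 'b list) option" where
  "glb X = (if finite X \<and> X \<noteq> {} \<and> pairwise_comparable (fst ` X)
                 \<and> pairwise_comparable (snd ` X)
            then Some (ARG_MAX length x. x \<in> fst ` X, ARG_MAX length y. y \<in> snd ` X)
            else None)"

text \<open>Unconditioned count f(p) (for a fully specified e, f(e) = count S e).\<close>
definition fcount :: "('a list \<times> 'b list) multiset \<Rightarrow> ('a list \<times> 'b list) \<Rightarrow> nat" where
  "fcount S p = (\<Sum>e\<in>{e \<in> set_mset S. pre_le e p}. count S e)"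

definition P_below :: "('a list \<times> 'b list) set \<Rightarrow> ('a list \<times> 'b list) \<Rightarrow> ('a list \<times> 'b list) set" where
  "P_below P p = {q \<in> P. pre_lt q p}"

definition Fcond :: "'a list set \<Rightarrow> 'b list set \<Rightarrow> ('a list \<times> 'b list) multiset
    \<Rightarrow> ('a list \<times> 'b list) set \<Rightarrow> ('a list \<times> 'b list) \<Rightarrow> nat" where
  "Fcond T1 T2 S P p = (\<Sum>e\<in>{e \<in> T1 \<times> T2. fully_specified T1 T2 e \<and> pre_le e p
        \<and> (\<forall>q\<in>P_below P p. \<not> pre_le e q)}. count S e)"

definition H_set :: "('a list \<times> 'b list) set \<Rightarrow> ('a list \<times> 'b list) \<Rightarrow> ('a list \<times> 'b list) set" where
  "H_set P p = {h \<in> P. pre_lt h p \<and> \<not> (\<exists>h'\<in>P. pre_lt h h' \<and> pre_lt h' p)}"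

definition T_set :: "('a list \<times> 'b list) set \<Rightarrow> ('a list \<times> 'b list) \<Rightarrow> ('a list \<times> 'b list) set" where
  "T_set P p = {q. (\<exists>h\<in>H_set P p. \<exists>h'\<in>H_set P p. h \<noteq> h' \<and> glb {h, h'} = Some q)
      \<and> \<not> (\<exists>X\<subseteq>H_set P p. card X \<ge> 3 \<and> glb X = Some q)}"

end

theory Submission
  imports Defs
begin

lemma chain_max:
  fixes A :: "'c list set"
  assumes "finite A" "A \<noteq> {}" "pairwise_comparable A"
  shows "(ARG_MAX length x. x \<in> A) \<in> A \<and> (\<forall>x\<in>A. prefix x (ARG_MAX length x. x \<in> A))"
proof -
  obtain k where k: "k \<in> A" using assms(2) by blast
  have b: "\<forall>y. y \<in> A \<longrightarrow> length y < Suc (Max (length ` A))"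
    using assms(1) by (simp add: le_imp_less_Suc)
  let ?m = "ARG_MAX length x. x \<in> A"
  have m: "?m \<in> A" "\<forall>y. y \<in> A \<longrightarrow> length y \<le> length ?m"
    using arg_max_nat_lemma[of "\<lambda>x. x \<in> A", OF k b] by auto
  have "\<forall>x\<in>A. prefix x ?m"
  proof
    fix x assume x: "x \<in> A"
    then have "prefix x ?m \<or> prefix ?m x" using assms(3) m(1) unfolding pairwise_comparable_def by blast
    then show "prefix x ?m" using m(2) x
      by (metis prefix_length_le prefix_length_prefix prefix_order.eq_iff prefix_order.refl le_antisym)
  qed
  then show ?thesis using m by blast
qed

lemma chain_max_eq:
  fixes A :: "'c list set"
  assumes "finite A" "c \<in> A" "\<forall>x\<in>A. prefix x c"
  shows "(ARG_MAX length x. x \<in> A) = c"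
proof -
  have pc: "pairwise_comparable A" using assms unfolding pairwise_comparable_def
    by (meson prefix_same_cases)
  from chain_max[OF assms(1) _ pc] assms show ?thesis
    by (metis empty_iff prefix_order.antisym)
qed

lemma glb_Some_iff:
  "glb X = Some q \<longleftrightarrow> finite X \<and> X \<noteq> {} \<and> fst q \<in> fst ` X \<and> (\<forall>x\<in>X. prefix (fst x) (fst q))
     \<and> snd q \<in> snd ` X \<and> (\<forall>x\<in>X. prefix (snd x) (snd q))"
proof
  assume g: "glb X = Some q"
  then have c: "finite X" "X \<noteq> {}" "pairwise_comparable (fst ` X)" "pairwise_comparable (snd ` X)"
    and q: "q = (ARG_MAX length x. x \<in> fst ` X, ARG_MAX length y. y \<in> snd ` X)"
    unfolding glb_def by (auto split: if_splits)
  show "finite X \<and> X \<noteq> {} \<and> fst q \<in> fst ` X \<and> (\<forall>x\<in>X. prefix (fst x) (fst q))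
     \<and> snd q \<in> snd ` X \<and> (\<forall>x\<in>X. prefix (snd x) (snd q))"
    using chain_max[of "fst ` X"] chain_max[of "snd ` X"] c q by auto
next
  assume a: "finite X \<and> X \<noteq> {} \<and> fst q \<in> fst ` X \<and> (\<forall>x\<in>X. prefix (fst x) (fst q))
     \<and> snd q \<in> snd ` X \<and> (\<forall>x\<in>X. prefix (snd x) (snd q))"
  have p1: "pairwise_comparable (fst ` X)" using a unfolding pairwise_comparable_def
    by (metis (no_types, lifting) image_iff prefix_same_cases)
  have p2: "pairwise_comparable (snd ` X)" using a unfolding pairwise_comparable_def
    by (metis (no_types, lifting) image_iff prefix_same_cases)
  have e1: "(ARG_MAX length x. x \<in> fst ` X) = fst q" using a by (intro chain_max_eq) auto
  have e2: "(ARG_MAX length x. x \<in> snd ` X) = snd q" using a by (intro chain_max_eq) auto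
  show "glb X = Some q" unfolding glb_def using a p1 p2 e1 e2 by simp
qed

lemma core:
  fixes H :: "('a list \<times> 'b list) set" and e :: "'a list \<times> 'b list"
  assumes fin: "finite H" and anti: "\<forall>x\<in>H. \<forall>y\<in>H. pre_le x y \<longrightarrow> x = y"
    and Kdef: "K = {h\<in>H. pre_le e h}" and Kne: "K \<noteq> {}"
  shows "card {q \<in> {q. (\<exists>h\<in>H. \<exists>h'\<in>H. h \<noteq> h' \<and> glb {h, h'} = Some q)
      \<and> \<not> (\<exists>X\<subseteq>H. card X \<ge> 3 \<and> glb X = Some q)}. pre_le e q} + 1 = card K"
proof -
  define L1 where "L1 x = length (fst x)" for x :: "'a list \<times> 'b list"
  define L2 where "L2 x = length (snd x)" for x :: "'a list \<times> 'b list"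
  define Te where "Te = {q \<in> {q. (\<exists>h\<in>H. \<exists>h'\<in>H. h \<noteq> h' \<and> glb {h, h'} = Some q)
      \<and> \<not> (\<exists>X\<subseteq>H. card X \<ge> 3 \<and> glb X = Some q)}. pre_le e q}"
  have finK: "finite K" using fin Kdef by simp
  have KH: "K \<subseteq> H" using Kdef by auto
  have Kp: "prefix (fst x) (fst e) \<and> prefix (snd x) (snd e)" if "x \<in> K" for x
    using that Kdef unfolding pre_le_def by auto
  have F0: "prefix (fst x) (fst y)" if "x \<in> K" "y \<in> K" "L1 x \<le> L1 y" for x y
    using Kp[OF that(1)] Kp[OF that(2)] that(3) prefix_length_prefix unfolding L1_def by blast
  have G0: "prefix (snd x) (snd y)" if "x \<in> K" "y \<in> K" "L2 x \<le> L2 y" for x y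
    using Kp[OF that(1)] Kp[OF that(2)] that(3) prefix_length_prefix unfolding L2_def by blast
  have F1: "x = y" if "x \<in> K" "y \<in> K" "L1 x = L1 y" for x y
  proof -
    have "pre_le x y \<or> pre_le y x"
      using F0[OF that(1,2)] F0[OF that(2,1)] G0[OF that(1,2)] G0[OF that(2,1)] that(3)
      unfolding pre_le_def by linarith
    then show ?thesis using anti that KH by blast
  qed
  have F2: "L2 y < L2 x" if "x \<in> K" "y \<in> K" "L1 x < L1 y" for x y
  proof (rule ccontr)
    assume "\<not> L2 y < L2 x"
    then have "pre_le y x" using F0[OF that(1,2)] G0[OF that(1,2)] that(3) unfolding pre_le_def by simp
    then have "x = y" using anti that KH by blast
    then show False using that(3) by simp
  qed
  define adj where "adj x y \<longleftrightarrow> x \<in> K \<and> y \<in> K \<and> L1 x < L1 y \<and> (\<forall>z\<in>K. L1 z < L1 y \<longrightarrow> L1 z \<le> L1 x)" for x y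
  have glb2: "glb {x, y} = Some (fst y, snd x)" if "x \<in> K" "y \<in> K" "L1 x < L1 y" for x y
    using F0[OF that(1,2)] F2[OF that] G0[OF that(2,1)] that(3)
    by (subst glb_Some_iff) auto
  have sub1: "adj x y \<and> q = (fst y, snd x)"
    if "x \<in> K" "y \<in> K" "L1 x < L1 y" "glb {x, y} = Some q"
       "\<not> (\<exists>X\<subseteq>H. card X \<ge> 3 \<and> glb X = Some q)" for x y q
  proof -
    have q: "q = (fst y, snd x)" using glb2[OF that(1-3)] that(4) by simp
    have "\<forall>z\<in>K. L1 z < L1 y \<longrightarrow> L1 z \<le> L1 x"
    proof (intro ballI impI, rule ccontr)
      fix z assume z: "z \<in> K" "L1 z < L1 y" "\<not> L1 z \<le> L1 x"
      have "x \<noteq> z" "z \<noteq> y" "x \<noteq> y" using z that(3) by auto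
      then have "card {x, z, y} = 3" by simp
      moreover have "{x, z, y} \<subseteq> H" using z that KH by auto
      moreover have "glb {x, z, y} = Some q"
      proof -
        have lxz: "L1 x < L1 z" using z(3) by linarith
        have a1: "prefix (fst x) (fst y)" using F0[OF that(1,2)] that(3) by simp
        have a2: "prefix (fst z) (fst y)" using F0[OF z(1) that(2)] z(2) by simp
        have b1: "prefix (snd z) (snd x)" using G0[OF z(1) that(1)] F2[OF that(1) z(1) lxz] by simp
        have b2: "prefix (snd y) (snd x)" using G0[OF that(2,1)] F2[OF that(1-3)] by simp
        show ?thesis unfolding q using a1 a2 b1 b2 by (intro glb_Some_iff[THEN iffD2]) auto
      qed
      ultimately show False using that(5) by (metis order_refl)
    qed
    then show ?thesis using q that unfolding adj_def by blast
  qed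
  have char: "q \<in> Te \<longleftrightarrow> (\<exists>x y. adj x y \<and> q = (fst y, snd x))" for q
  proof
    assume "q \<in> Te"
    then obtain h h' where hh: "h \<in> H" "h' \<in> H" "h \<noteq> h'" "glb {h, h'} = Some q"
      and nt: "\<not> (\<exists>X\<subseteq>H. card X \<ge> 3 \<and> glb X = Some q)" and eq: "pre_le e q"
      unfolding Te_def by blast
    have pq: "prefix (fst h) (fst q)" "prefix (fst h') (fst q)" "prefix (snd h) (snd q)" "prefix (snd h') (snd q)"
      using hh(4) by (subst (asm) glb_Some_iff, auto)+
    have "h \<in> K" "h' \<in> K" using pq eq hh Kdef unfolding pre_le_def
      by (auto intro: prefix_order.trans)
    moreover have "L1 h \<noteq> L1 h'" using F1 calculation hh(3) by blast
    ultimately consider "L1 h < L1 h'" | "L1 h' < L1 h" by linarith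
    then show "\<exists>x y. adj x y \<and> q = (fst y, snd x)"
    proof cases
      case 1
      then show ?thesis using sub1[of h h' q] \<open>h \<in> K\<close> \<open>h' \<in> K\<close> hh(4) nt by blast
    next
      case 2
      have "glb {h', h} = Some q" using hh(4) by (simp add: insert_commute)
      then show ?thesis using sub1[of h' h q] 2 \<open>h \<in> K\<close> \<open>h' \<in> K\<close> nt by blast
    qed
  next
    assume "\<exists>x y. adj x y \<and> q = (fst y, snd x)"
    then obtain x y where a: "adj x y" and q: "q = (fst y, snd x)" by blast
    have xy: "x \<in> K" "y \<in> K" "L1 x < L1 y" and ad: "\<forall>z\<in>K. L1 z < L1 y \<longrightarrow> L1 z \<le> L1 x"
      using a unfolding adj_def by auto
    have eq: "pre_le e q" using Kp[OF xy(1)] Kp[OF xy(2)] q unfolding pre_le_def by simp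
    have "\<not> (\<exists>X\<subseteq>H. card X \<ge> 3 \<and> glb X = Some q)"
    proof
      assume "\<exists>X\<subseteq>H. card X \<ge> 3 \<and> glb X = Some q"
      then obtain X where X: "X \<subseteq> H" "card X \<ge> 3" "glb X = Some q" by blast
      have Xp: "\<forall>x'\<in>X. prefix (fst x') (fst y) \<and> prefix (snd x') (snd x)" "finite X"
        using X(3) q by (subst (asm) glb_Some_iff, auto)+
      have XK: "X \<subseteq> K" using Xp X(1) Kdef Kp[OF xy(1)] Kp[OF xy(2)] unfolding pre_le_def
        by (auto intro: prefix_order.trans)
      have "\<not> X \<subseteq> {x, y}"
      proof
        assume "X \<subseteq> {x, y}"
        then have "card X \<le> card {x, y}" by (intro card_mono) auto
        also have "\<dots> \<le> 2" by (simp add: card_insert_le_m1)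
        finally show False using X(2) by simp
      qed
      then obtain z where z: "z \<in> X" "z \<noteq> x" "z \<noteq> y" by blast
      have zK: "z \<in> K" using z XK by auto
      have "L1 z \<le> L1 y" "L2 z \<le> L2 x" using Xp z(1) prefix_length_le unfolding L1_def L2_def by blast+
      then have "L1 z < L1 y" using F1[OF zK xy(2)] z by linarith
      moreover have "L1 x < L1 z"
      proof -
        have "L1 z \<noteq> L1 x" using F1[OF zK xy(1)] z by blast
        moreover have "\<not> L1 z < L1 x" using F2[OF zK xy(1)] \<open>L2 z \<le> L2 x\<close> by linarith
        ultimately show ?thesis by linarith
      qed
      moreover have "L1 z \<le> L1 x" using ad zK calculation(1) by blast
      ultimately show False by linarith
    qed
    moreover have "x \<noteq> y" using xy by auto
    ultimately show "q \<in> Te" unfolding Te_def using glb2[OF xy] q eq xy KH by blast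
  qed
  obtain hmin where hmin: "hmin \<in> K" "\<forall>z\<in>K. L1 hmin \<le> L1 z"
    using ex_has_least_nat[of "\<lambda>x. x \<in> K" _ L1] Kne by blast
  define pred where "pred y = (SOME x. adj x y)" for y
  have predI: "adj (pred y) y" if "y \<in> K - {hmin}" for y
  proof -
    have yK: "y \<in> K" "y \<noteq> hmin" using that by auto
    have "L1 hmin \<noteq> L1 y" using F1[OF hmin(1) yK(1)] yK(2) by auto
    then have lt: "L1 hmin < L1 y" using hmin(2) yK(1) by (meson le_neq_implies_less)
    obtain x where "x \<in> K \<and> L1 x < L1 y" "\<forall>z. z \<in> K \<and> L1 z < L1 y \<longrightarrow> L1 z \<le> L1 x"
      using ex_has_greatest_nat[of "\<lambda>x. x \<in> K \<and> L1 x < L1 y" hmin L1 "L1 y"] hmin lt by blast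
    then have "adj x y" using that unfolding adj_def by auto
    then show ?thesis unfolding pred_def by (rule someI)
  qed
  define g where "g y = (fst y, snd (pred y))" for y
  have inj: "inj_on g (K - {hmin})"
  proof (rule inj_onI)
    fix y y' assume "y \<in> K - {hmin}" "y' \<in> K - {hmin}" "g y = g y'"
    then show "y = y'" using F1[of y y'] unfolding g_def L1_def by auto
  qed
  have img: "g ` (K - {hmin}) = Te"
  proof
    show "g ` (K - {hmin}) \<subseteq> Te" using predI char unfolding g_def by blast
    show "Te \<subseteq> g ` (K - {hmin})"
    proof
      fix q assume "q \<in> Te"
      then obtain x y where a: "adj x y" and q: "q = (fst y, snd x)" using char by blast
      have "y \<in> K" "x \<in> K" "L1 x < L1 y" using a unfolding adj_def by auto
      then have y: "y \<in> K - {hmin}" using hmin(2) by fastforce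
      have a2: "adj (pred y) y" using predI[OF y] .
      have "L1 (pred y) = L1 x" using a a2 unfolding adj_def by (meson le_antisym)
      then have "pred y = x" using F1 a a2 unfolding adj_def by blast
      then have "q = g y" unfolding g_def q by simp
      then show "q \<in> g ` (K - {hmin})" using y by blast
    qed
  qed
  have "card Te = card (K - {hmin})" using card_image[OF inj] img by simp
  also have "\<dots> = card K - 1" using hmin(1) by simp
  moreover have "card K > 0" using finK hmin(1) card_gt_0_iff by blast
  ultimately have "card Te + 1 = card K" by linarith
  then show ?thesis unfolding Te_def .
qed

lemma pre_le_trans: "pre_le a b \<Longrightarrow> pre_le b c \<Longrightarrow> pre_le a c"
  unfolding pre_le_def by (meson prefix_order.trans)

lemma pre_le_antisym: "pre_le a b \<Longrightarrow> pre_le b a \<Longrightarrow> a = b"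
  unfolding pre_le_def by (simp add: prefix_order.eq_iff prod_eq_iff)

lemma pre_lt_len: "pre_lt a b \<Longrightarrow> length (fst b) + length (snd b) < length (fst a) + length (snd a)"
proof -
  assume "pre_lt a b"
  then have "prefix (fst b) (fst a)" "prefix (snd b) (snd a)" "a \<noteq> b" unfolding pre_lt_def pre_le_def by auto
  moreover have "fst a \<noteq> fst b \<or> snd a \<noteq> snd b" using calculation(3) by (simp add: prod_eq_iff)
  ultimately show ?thesis
    by (metis add_le_less_mono add_less_le_mono prefix_length_le prefix_order.le_neq_trans prefix_length_less)
qed

lemma H_anti: "\<forall>x\<in>H_set P p. \<forall>y\<in>H_set P p. pre_le x y \<longrightarrow> x = y"
  unfolding H_set_def pre_lt_def by blast

lemma H_max: assumes "q \<in> P_below P p" shows "\<exists>h\<in>H_set P p. pre_le q h"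
proof -
  let ?m = "\<lambda>x. length (fst x) + length (snd x)"
  obtain h where h: "h \<in> P_below P p \<and> pre_le q h" "\<forall>y. y \<in> P_below P p \<and> pre_le q y \<longrightarrow> ?m h \<le> ?m y"
    using ex_has_least_nat[of "\<lambda>x. x \<in> P_below P p \<and> pre_le q x" q ?m] assms
    unfolding pre_le_def by auto
  have "h \<in> H_set P p"
  proof -
    have "\<not> (\<exists>h'\<in>P. pre_lt h h' \<and> pre_lt h' p)"
    proof
      assume "\<exists>h'\<in>P. pre_lt h h' \<and> pre_lt h' p"
      then obtain h' where h': "h' \<in> P" "pre_lt h h'" "pre_lt h' p" by blast
      have "h' \<in> P_below P p \<and> pre_le q h'" using h' h(1) unfolding P_below_def pre_lt_def
        by (auto intro: pre_le_trans)
      then have "?m h \<le> ?m h'" using h(2) by blast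
      then show False using pre_lt_len[OF h'(2)] by linarith
    qed
    then show ?thesis using h(1) unfolding H_set_def P_below_def by blast
  qed
  then show ?thesis using h by blast
qed

lemma T_below_H: assumes "q \<in> T_set P p" shows "\<exists>h\<in>H_set P p. pre_le q h"
proof -
  obtain h h' where "h \<in> H_set P p" "glb {h, h'} = Some q"
    using assms unfolding T_set_def by blast
  then show ?thesis unfolding pre_le_def by (subst (asm) glb_Some_iff) auto
qed

lemma per_e:
  assumes finP: "finite P"
  shows "int (if pre_le e p \<and> (\<forall>q\<in>P_below P p. \<not> pre_le e q) then 1 else 0)
    = (if pre_le e p then 1 else 0) - int (card {h \<in> H_set P p. pre_le e h})
      + int (card {q \<in> T_set P p. pre_le e q})"
proof -
  let ?K = "{h \<in> H_set P p. pre_le e h}"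
  let ?Te = "{q \<in> T_set P p. pre_le e q}"
  have Hp: "pre_le h p" if "h \<in> H_set P p" for h using that unfolding H_set_def pre_lt_def by auto
  have Tp: "\<exists>h\<in>?K. True" if "q \<in> ?Te" for q
    using that T_below_H[of q P p] pre_le_trans by blast
  show ?thesis
  proof (cases "?K = {}")
    case True
    then have "?Te = {}" using Tp by blast
    moreover have "\<forall>q\<in>P_below P p. \<not> pre_le e q" using True H_max pre_le_trans by blast
    moreover have c1: "card ?K = 0" using True by (simp only: card.empty)
    moreover have c2: "card ?Te = 0" using calculation(1) by (simp only: card.empty)
    ultimately show ?thesis unfolding c1 c2 by simp
  next
    case False
    then obtain h where h: "h \<in> H_set P p" "pre_le e h" by blast
    have ep: "pre_le e p" using h Hp pre_le_trans by blast
    have "h \<in> P_below P p" using h(1) unfolding H_set_def P_below_def by auto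
    then have neg: "\<not> (\<forall>q\<in>P_below P p. \<not> pre_le e q)" using h by blast
    have finH: "finite (H_set P p)" using finP unfolding H_set_def by simp
    have "card ?Te + 1 = card ?K"
      using core[OF finH H_anti[of P p] refl False] unfolding T_set_def by simp
    then show ?thesis using ep neg by simp
  qed
qed

lemma fcount_int: "int (fcount S q) = (\<Sum>e\<in>set_mset S. int (count S e) * (if pre_le e q then 1 else 0))"
  unfolding fcount_def by (auto simp: sum.inter_filter of_nat_sum intro!: sum.cong)

lemma sum_fcount: "finite A \<Longrightarrow> (\<Sum>q\<in>A. int (fcount S q))
   = (\<Sum>e\<in>set_mset S. int (count S e) * int (card {q\<in>A. pre_le e q}))"
proof -
  assume fA: "finite A"
  have "(\<Sum>q\<in>A. int (fcount S q)) = (\<Sum>e\<in>set_mset S. \<Sum>q\<in>A. int (count S e) * (if pre_le e q then 1 else 0))"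
    unfolding fcount_int by (rule sum.swap)
  also have "\<dots> = (\<Sum>e\<in>set_mset S. int (count S e) * int (card {q\<in>A. pre_le e q}))"
  proof (rule sum.cong[OF refl])
    fix e
    have "(\<Sum>q\<in>A. (if pre_le e q then 1 else 0) :: int) = int (card {q\<in>A. pre_le e q})"
      using fA by (simp add: sum.inter_filter[symmetric])
    then show "(\<Sum>q\<in>A. int (count S e) * (if pre_le e q then 1 else 0)) = int (count S e) * int (card {q\<in>A. pre_le e q})"
      by (simp add: sum_distrib_left[symmetric])
  qed
  finally show ?thesis .
qed

theorem theorem4:
  fixes T1 :: "'a list set" and T2 :: "'b list set" and h1 h2 :: nat
    and S :: "('a list \<times> 'b list) multiset"
    and P :: "('a list \<times> 'b list) set" and p :: "'a list \<times> 'b list"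
  assumes "rooted_tree T1" and "rooted_tree T2"
    and "leaves_at_depth T1 h1" and "leaves_at_depth T2 h2"
    and "\<forall>e\<in>#S. fully_specified T1 T2 e"
    and "P \<subseteq> T1 \<times> T2" and "p \<in> T1 \<times> T2"
  shows "int (Fcond T1 T2 S P p)
          = int (fcount S p) - (\<Sum>q\<in>H_set P p. int (fcount S q))
            + (\<Sum>q\<in>T_set P p. int (fcount S q))"
proof -
  have fT: "finite (T1 \<times> T2)" using assms(1,2) unfolding rooted_tree_def by simp
  have finP: "finite P" using fT assms(6) finite_subset by blast
  have finH: "finite (H_set P p)" using finP unfolding H_set_def by simp
  have finT: "finite (T_set P p)"
  proof -
    have "T_set P p \<subseteq> (\<lambda>(h, h'). the (glb {h, h'})) ` (H_set P p \<times> H_set P p)"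
      unfolding T_set_def by (force simp: image_iff)
    then show ?thesis using finite_subset finH by blast
  qed
  define E where "E = set_mset S"
  define Q where "Q e \<longleftrightarrow> pre_le e p \<and> (\<forall>q\<in>P_below P p. \<not> pre_le e q)" for e
  define A where "A = {e \<in> T1 \<times> T2. fully_specified T1 T2 e \<and> Q e}"
  have ES: "E \<subseteq> T1 \<times> T2 \<and> (\<forall>e\<in>E. fully_specified T1 T2 e)"
    using assms(5) unfolding E_def fully_specified_def is_leaf_def by (auto simp: mem_Times_iff)
  have "Fcond T1 T2 S P p = (\<Sum>e\<in>A. count S e)"
    unfolding Fcond_def A_def Q_def by simp
  also have "\<dots> = (\<Sum>e\<in>A \<inter> E. count S e)"
    using fT unfolding A_def E_def by (intro sum.mono_neutral_right) auto
  also have "A \<inter> E = {e\<in>E. Q e}" using ES unfolding A_def by auto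
  finally have F: "int (Fcond T1 T2 S P p) = (\<Sum>e\<in>E. int (count S e) * int (if Q e then 1 else 0))"
    unfolding E_def by (auto simp: sum.inter_filter of_nat_sum intro!: sum.cong)
  have "int (fcount S p) - (\<Sum>q\<in>H_set P p. int (fcount S q)) + (\<Sum>q\<in>T_set P p. int (fcount S q))
     = (\<Sum>e\<in>E. int (count S e) * ((if pre_le e p then 1 else 0) - int (card {h \<in> H_set P p. pre_le e h})
      + int (card {q \<in> T_set P p. pre_le e q})))"
    unfolding sum_fcount[OF finH] sum_fcount[OF finT] unfolding fcount_int E_def
    by (simp add: algebra_simps sum.distrib sum_subtractf)
  also have "\<dots> = (\<Sum>e\<in>E. int (count S e) * int (if Q e then 1 else 0))"
    using per_e[OF finP] unfolding Q_def by simp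
  finally show ?thesis using F by simp
qed

end
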